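(* (Soundness of $\mathsf{GT}$.) For all finite multisets of formulas $\Gamma,\Delta$ of $\mathbf{PL}(\mathbin{\backslash\!\!/})$: if $\vdash_{\mathsf{GT}}\Gamma\Rightarrow\Delta$, then $\Gamma\models\bigvee\Delta$.
   Context: Fix a countably infinite set $\mathsf{Prop}$ of propositional variables. Classical formulas are generated by $\alpha ::= p \mid \bot \mid \neg\alpha \mid \alpha\wedge\alpha \mid \alpha\vee\alpha$ with $p\in\mathsf{Prop}$. Formulas of basic propositional team logic $\mathbf{PL}(\mathbin{\backslash\!\!/})$ are generated by $\phi ::= \alpha \mid \phi\wedge\phi \mid \phi\vee\phi \mid \phi\mathbin{\backslash\!\!/}\phi$ where $\alpha$ is classical (so negation is applied only to classical formulas); $\vee$ is the split disjunction and $\mathbin{\backslash\!\!/}$ the inquisitive disjunction. A team with domain $X\subseteq\mathsf{Prop}$ is a set $t\subseteq 2^X$ of valuations. For a team $t$ whose domain contains the variables of the formula: $t\models p$ iff $v(p)=1$ for all $v\in t$; $t\models\bot$ iff $t=\emptyset$; $t\models\neg\alpha$ iff $\{v\}\not\models\alpha$ for all $v\in t$; $t\models\phi\wedge\psi$ iff $t\models\phi$ and $t\models\psi$; $t\models\phi\vee\psi$ iff there are $s,u\subseteq t$ with $t=s\cup u$, $s\models\phi$, $u\models\psi$; $t\models\phi\mathbin{\backslash\!\!/}\psi$ iff $t\models\phi$ or $t\models\psi$. For a multiset $\Gamma$, $\Gamma\models\phi$ means every team satisfying all members of $\Gamma$ satisfies $\phi$. Conventions: $\bigvee\emptyset:=\bot$,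 $\bigwedge\emptyset:=\neg\bot$. A sequent is $\Gamma\Rightarrow\Delta$ with $\Gamma,\Delta$ finite multisets of formulas; "$\Gamma,\Delta$" denotes multiset union. Deep-inference notation: for a formula $\chi$ with a designated occurrence of a subformula that does not lie in the scope of any negation, $\chi\{\eta\}$ denotes the result of replacing that occurrence by $\eta$. The calculus $\mathsf{GT}$ (below $\alpha$ ranges over classical formulas, $\Lambda$ over multisets of classical formulas, everything else arbitrary): axioms $\Gamma,p\Rightarrow p,\Delta$ and $\Gamma,\bot\Rightarrow\Delta$; rules: (L$\neg$) from $\Gamma\Rightarrow\alpha,\Delta$ infer $\Gamma,\neg\alpha\Rightarrow\Delta$; (R$\neg$) from $\Gamma,\alpha\Rightarrow\Delta$ infer $\Gamma\Rightarrow\neg\alpha,\Delta$; (L$\wedge$) from $\Gamma,\phi,\psi\Rightarrow\Delta$ infer $\Gamma,\phi\wedge\psi\Rightarrow\Delta$; (R$\wedge$) from $\Gamma\Rightarrow\phi,\Lambda$ and $\Gamma\Rightarrow\psi,\Lambda$ infer $\Gamma\Rightarrow\phi\wedge\psi,\Lambda,\Delta$; (L$\vee$) from $\Gamma,\phi\Rightarrow\Lambda$ and $\Gamma,\psi\Rightarrow\Lambda$ infer $\Gamma,\phi\vee\psi\Rightarrow\Lambda,\Delta$; (R$\vee$) from $\Gamma\Rightarrow\phi,\psi,\Delta$ infer $\Gamma\Rightarrow\phi\vee\psi,\Delta$; (L$\mathbin{\backslash\!\!/}$) from $\Gamma,\chi\{\phi_L\}\Rightarrow\Delta$ and $\Gamma,\chi\{\phi_R\}\Rightarrow\Delta$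 infer $\Gamma,\chi\{\phi_L\mathbin{\backslash\!\!/}\phi_R\}\Rightarrow\Delta$; (R$\mathbin{\backslash\!\!/}$) from $\Gamma\Rightarrow\chi\{\phi_i\},\Delta$ ($i\in\{L,R\}$) infer $\Gamma\Rightarrow\chi\{\phi_L\mathbin{\backslash\!\!/}\phi_R\},\Delta$; (Cut) from $\Gamma\Rightarrow\phi,\Delta$ and $\Pi,\phi\Rightarrow\Sigma$ infer $\Pi,\Gamma\Rightarrow\Delta,\Sigma$. $\vdash_{\mathsf{GT}}$ denotes derivability in $\mathsf{GT}$. *)

theory Defs
  imports Main "HOL-Library.Multiset"
begin

text \<open>One datatype for all formulas; the predicates classical and wf single out
  classical formulas and formulas of PL(inquisitive disjunction)
  (negation only applied to classical formulas).\<close>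

datatype fml =
    Var nat
  | Bot
  | Neg fml
  | Conj fml fml
  | Disj fml fml
  | IDisj fml fml

fun classical :: "fml \<Rightarrow> bool" where
  "classical (Var p) = True"
| "classical Bot = True"
| "classical (Neg a) = classical a"
| "classical (Conj a b) = (classical a \<and> classical b)"
| "classical (Disj a b) = (classical a \<and> classical b)"
| "classical (IDisj a b) = False"

fun wf :: "fml \<Rightarrow> bool" where
  "wf (Var p) = True"
| "wf Bot = True"
| "wf (Neg a) = classical a"
| "wf (Conj a b) = (wf a \<and> wf b)"
| "wf (Disj a b) = (wf a \<and> wf b)"
| "wf (IDisj a b) = (wf a \<and> wf b)"

definition wfs :: "fml multiset \<Rightarrow> bool" where
  "wfs M = (\<forall>\<phi>\<in>#M. wf \<phi>)"

definition classicals :: "fml multiset \<Rightarrow> bool" where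
  "classicals M = (\<forall>\<phi>\<in>#M. classical \<phi>)"

fun vars :: "fml \<Rightarrow> nat set" where
  "vars (Var p) = {p}"
| "vars Bot = {}"
| "vars (Neg a) = vars a"
| "vars (Conj a b) = vars a \<union> vars b"
| "vars (Disj a b) = vars a \<union> vars b"
| "vars (IDisj a b) = vars a \<union> vars b"

text \<open>Deep-inference contexts: a formula with one designated hole that is not
  in the scope of any negation.\<close>

datatype ctx =
    Hole
  | CConjL ctx fml | CConjR fml ctx
  | CDisjL ctx fml | CDisjR fml ctx
  | CIDisjL ctx fml | CIDisjR fml ctx

fun fill :: "ctx \<Rightarrow> fml \<Rightarrow> fml" where
  "fill Hole e = e"
| "fill (CConjL c b) e = Conj (fill c e) b"
| "fill (CConjR a c) e = Conj a (fill c e)"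
| "fill (CDisjL c b) e = Disj (fill c e) b"
| "fill (CDisjR a c) e = Disj a (fill c e)"
| "fill (CIDisjL c b) e = IDisj (fill c e) b"
| "fill (CIDisjR a c) e = IDisj a (fill c e)"

text \<open>Big split disjunction of a multiset: for a list,
  [] gives Bot, [a] gives a, a # as gives Disj a (bigdisj as); for a multiset
  we take some enumeration (the choice is irrelevant semantically).\<close>

fun bigdisj_list :: "fml list \<Rightarrow> fml" where
  "bigdisj_list [] = Bot"
| "bigdisj_list [a] = a"
| "bigdisj_list (a # as) = Disj a (bigdisj_list as)"

definition bigdisj :: "fml multiset \<Rightarrow> fml" where
  "bigdisj M = bigdisj_list (SOME xs. mset xs = M)"

text \<open>A valuation with domain X is represented by a function nat \<Rightarrow> bool that is
  False outside X; a team with domain X is a set of such functions.\<close>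

definition team_on :: "nat set \<Rightarrow> (nat \<Rightarrow> bool) set \<Rightarrow> bool" where
  "team_on X t = (\<forall>v\<in>t. \<forall>x. x \<notin> X \<longrightarrow> \<not> v x)"

fun sat :: "(nat \<Rightarrow> bool) set \<Rightarrow> fml \<Rightarrow> bool" where
  "sat t (Var p) = (\<forall>v\<in>t. v p)"
| "sat t Bot = (t = {})"
| "sat t (Neg a) = (\<forall>v\<in>t. \<not> sat {v} a)"
| "sat t (Conj a b) = (sat t a \<and> sat t b)"
| "sat t (Disj a b) = (\<exists>s u. s \<subseteq> t \<and> u \<subseteq> t \<and> t = s \<union> u \<and> sat s a \<and> sat u b)"
| "sat t (IDisj a b) = (sat t a \<or> sat t b)"

definition entails :: "fml multiset \<Rightarrow> fml \<Rightarrow> bool" where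
  "entails \<Gamma> \<phi> = (\<forall>X t. (\<Union>\<gamma>\<in>set_mset \<Gamma>. vars \<gamma>) \<union> vars \<phi> \<subseteq> X \<longrightarrow> team_on X t \<longrightarrow>
                       (\<forall>\<gamma>\<in>#\<Gamma>. sat t \<gamma>) \<longrightarrow> sat t \<phi>)"

text \<open>Side
  conditions wfs/wf ensure that only formulas of PL(inquisitive disjunction)
  occur in derivations.\<close>

inductive derivable :: "fml multiset \<Rightarrow> fml multiset \<Rightarrow> bool" where
  Ax: "wfs \<Gamma> \<Longrightarrow> wfs \<Delta> \<Longrightarrow> derivable (add_mset (Var p) \<Gamma>) (add_mset (Var p) \<Delta>)"
| AxBot: "wfs \<Gamma> \<Longrightarrow> wfs \<Delta> \<Longrightarrow> derivable (add_mset Bot \<Gamma>) \<Delta>"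
| LNeg: "classical a \<Longrightarrow> derivable \<Gamma> (add_mset a \<Delta>) \<Longrightarrow> derivable (add_mset (Neg a) \<Gamma>) \<Delta>"
| RNeg: "classical a \<Longrightarrow> derivable (add_mset a \<Gamma>) \<Delta> \<Longrightarrow> derivable \<Gamma> (add_mset (Neg a) \<Delta>)"
| LConj: "derivable (add_mset \<phi> (add_mset \<psi> \<Gamma>)) \<Delta> \<Longrightarrow> derivable (add_mset (Conj \<phi> \<psi>) \<Gamma>) \<Delta>"
| RConj: "classicals \<Lambda> \<Longrightarrow> wfs \<Delta> \<Longrightarrow> derivable \<Gamma> (add_mset \<phi> \<Lambda>) \<Longrightarrow>
          derivable \<Gamma> (add_mset \<psi> \<Lambda>) \<Longrightarrow> derivable \<Gamma> (add_mset (Conj \<phi> \<psi>) (\<Lambda> + \<Delta>))"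
| LDisj: "classicals \<Lambda> \<Longrightarrow> wfs \<Delta> \<Longrightarrow> derivable (add_mset \<phi> \<Gamma>) \<Lambda> \<Longrightarrow>
          derivable (add_mset \<psi> \<Gamma>) \<Lambda> \<Longrightarrow> derivable (add_mset (Disj \<phi> \<psi>) \<Gamma>) (\<Lambda> + \<Delta>)"
| RDisj: "derivable \<Gamma> (add_mset \<phi> (add_mset \<psi> \<Delta>)) \<Longrightarrow> derivable \<Gamma> (add_mset (Disj \<phi> \<psi>) \<Delta>)"
| LIDisj: "derivable (add_mset (fill c \<phi>L) \<Gamma>) \<Delta> \<Longrightarrow> derivable (add_mset (fill c \<phi>R) \<Gamma>) \<Delta> \<Longrightarrow>
           derivable (add_mset (fill c (IDisj \<phi>L \<phi>R)) \<Gamma>) \<Delta>"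
| RIDisjL: "wf \<phi>R \<Longrightarrow> derivable \<Gamma> (add_mset (fill c \<phi>L) \<Delta>) \<Longrightarrow>
            derivable \<Gamma> (add_mset (fill c (IDisj \<phi>L \<phi>R)) \<Delta>)"
| RIDisjR: "wf \<phi>L \<Longrightarrow> derivable \<Gamma> (add_mset (fill c \<phi>R) \<Delta>) \<Longrightarrow>
            derivable \<Gamma> (add_mset (fill c (IDisj \<phi>L \<phi>R)) \<Delta>)"
| Cut: "derivable \<Gamma> (add_mset \<phi> \<Delta>) \<Longrightarrow> derivable (add_mset \<phi> \<Pi>) \<Sigma> \<Longrightarrow>
        derivable (\<Pi> + \<Gamma>) (\<Delta> + \<Sigma>)"

end

theory Submission
  imports Defs
begin

inductive msat :: "(nat \<Rightarrow> bool) set \<Rightarrow> fml multiset \<Rightarrow> bool" where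
  mE: "msat {} {#}"
| mA: "sat s a \<Longrightarrow> msat u M \<Longrightarrow> msat (s \<union> u) (add_mset a M)"

lemma msat_add_D: "msat t N \<Longrightarrow> N = add_mset a M \<Longrightarrow> \<exists>s u. t = s \<union> u \<and> sat s a \<and> msat u M"
proof (induction t N arbitrary: a M rule: msat.induct)
  case mE then show ?case by simp
next
  case (mA s b u M')
  show ?case
  proof (cases "a = b")
    case True then show ?thesis using mA by auto
  next
    case False
    then have "a \<in># M'" using mA.prems by (metis insert_noteq_member)
    then obtain M'' where M'': "M' = add_mset a M''" by (metis multi_member_split)
    then obtain s' u' where h: "u = s' \<union> u'" "sat s' a" "msat u' M''" using mA.IH by blast
    have "M = add_mset b M''" using mA.prems M'' False
      by (metis add_mset_commute add_mset_remove_trivial)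
    moreover have "msat (s \<union> u') (add_mset b M'')" using mA.hyps(1) h(3) by (rule msat.mA)
    ultimately show ?thesis using h by (rule_tac x=s' in exI, rule_tac x="s \<union> u'" in exI) auto
  qed
qed

lemma msat_add: "msat t (add_mset a M) \<longleftrightarrow> (\<exists>s u. t = s \<union> u \<and> sat s a \<and> msat u M)"
proof
  assume "msat t (add_mset a M)" then show "\<exists>s u. t = s \<union> u \<and> sat s a \<and> msat u M"
    using msat_add_D by simp
next
  assume "\<exists>s u. t = s \<union> u \<and> sat s a \<and> msat u M"
  then obtain s u where "t = s \<union> u" "sat s a" "msat u M" by blast
  then show "msat t (add_mset a M)" using msat.mA by simp
qed

lemma msat_empty: "msat t {#} \<longleftrightarrow> t = {}"
proof
  assume "msat t {#}" then show "t = {}" by (cases rule: msat.cases) auto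
qed (simp add: msat.mE)

lemma msat_plus: "msat t (M + N) \<longleftrightarrow> (\<exists>s u. t = s \<union> u \<and> msat s M \<and> msat u N)"
proof (induction M arbitrary: t)
  case empty then show ?case by (auto simp: msat_empty)
next
  case (add a M)
  have "msat t (add_mset a M + N) \<longleftrightarrow> (\<exists>s u. t = s \<union> u \<and> sat s a \<and> msat u (M + N))"
    by (simp only: union_mset_add_mset_left msat_add)
  also have "\<dots> \<longleftrightarrow> (\<exists>s u. t = s \<union> u \<and> msat s (add_mset a M) \<and> msat u N)"
  proof
    assume "\<exists>s u. t = s \<union> u \<and> sat s a \<and> msat u (M + N)"
    then obtain s u where h: "t = s \<union> u" "sat s a" "msat u (M + N)" by iprover
    obtain u1 u2 where h2: "u = u1 \<union> u2" "msat u1 M" "msat u2 N" using add.IH[of u] h(3) by iprover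
    have "msat (s \<union> u1) (add_mset a M)" using h(2) h2(2) by (rule msat.mA)
    moreover have "t = (s \<union> u1) \<union> u2" using h h2 by blast
    ultimately show "\<exists>s u. t = s \<union> u \<and> msat s (add_mset a M) \<and> msat u N" using h2(3) by iprover
  next
    assume "\<exists>s u. t = s \<union> u \<and> msat s (add_mset a M) \<and> msat u N"
    then obtain s u where h: "t = s \<union> u" "msat s (add_mset a M)" "msat u N" by iprover
    obtain s1 s2 where h2: "s = s1 \<union> s2" "sat s1 a" "msat s2 M" using msat_add[of s a M] h(2) by iprover
    have "msat (s2 \<union> u) (M + N)" using add.IH[of "s2 \<union> u"] h(3) h2(3) by iprover
    moreover have "t = s1 \<union> (s2 \<union> u)" using h h2 by blast
    ultimately show "\<exists>s u. t = s \<union> u \<and> sat s a \<and> msat u (M + N)" using h2(2) by iprover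
  qed
  finally show ?case .
qed

lemma sat_empty: "sat {} a"
  by (induction a) auto

lemma msat_empty_team: "msat {} M"
proof (induction M)
  case empty then show ?case by (rule msat.mE)
next
  case (add a M) then show ?case using msat.mA[OF sat_empty add.IH] by simp
qed

lemma sat_down: "sat t a \<Longrightarrow> s \<subseteq> t \<Longrightarrow> sat s a"
proof (induction a arbitrary: t s)
  case (Disj a b)
  obtain s1 u1 where h: "t = s1 \<union> u1" "sat s1 a" "sat u1 b" using Disj.prems(1) by auto
  have "sat (s \<inter> s1) a" by (rule Disj.IH(1)[OF h(2)]) blast
  moreover have "sat (s \<inter> u1) b" by (rule Disj.IH(2)[OF h(3)]) blast
  moreover have "s = (s \<inter> s1) \<union> (s \<inter> u1)" using h(1) Disj.prems(2) by blast
  ultimately show ?case by (metis inf_le1 sat.simps(5))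
next
  case (Conj a b) then show ?case by (metis sat.simps(4))
next
  case (IDisj a b) then show ?case by (metis sat.simps(6))
next
  case (Neg a) then show ?case by (simp add: subset_iff)
next
  case (Var p) then show ?case by auto
next
  case Bot then show ?case by simp
qed

lemma msat_down: "msat t M \<Longrightarrow> s \<subseteq> t \<Longrightarrow> msat s M"
proof (induction t M arbitrary: s rule: msat.induct)
  case mE then show ?case by (simp add: msat.mE)
next
  case (mA s1 a u M)
  have "sat (s \<inter> s1) a" by (rule sat_down[OF mA.hyps(1)]) blast
  moreover have "msat (s \<inter> u) M" by (rule mA.IH) blast
  moreover have "s = (s \<inter> s1) \<union> (s \<inter> u)" using mA.prems by blast
  ultimately show ?case by (metis msat.mA)
qed

lemma sat_single: "sat t a \<Longrightarrow> v \<in> t \<Longrightarrow> sat {v} a"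
  by (erule sat_down) simp

lemma msat_single: "msat t M \<Longrightarrow> v \<in> t \<Longrightarrow> msat {v} M"
  by (erule msat_down) simp

lemma sat_flat: "classical a \<Longrightarrow> sat t a \<longleftrightarrow> (\<forall>v\<in>t. sat {v} a)"
proof (induction a arbitrary: t)
  case (Disj a b)
  have ca: "classical a" and cb: "classical b" using Disj.prems by auto
  show ?case
  proof
    assume "sat t (Disj a b)"
    then show "\<forall>v\<in>t. sat {v} (Disj a b)" using sat_single by blast
  next
    assume H: "\<forall>v\<in>t. sat {v} (Disj a b)"
    define s where "s = {v\<in>t. sat {v} a}"
    define u where "u = {v\<in>t. sat {v} b}"
    have "sat s a" using Disj.IH(1)[OF ca, of s] by (simp add: s_def)
    moreover have "sat u b" using Disj.IH(2)[OF cb, of u] by (simp add: u_def)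
    moreover have "t = s \<union> u"
    proof -
      { fix v assume v: "v \<in> t"
        have "sat {v} (Disj a b)" using H v by blast
        then obtain s' u' where h: "{v} = s' \<union> u'" "sat s' a" "sat u' b" by (simp only: sat.simps) iprover
        have "v \<in> s' \<or> v \<in> u'" using h(1) by blast
        then have "sat {v} a \<or> sat {v} b" using sat_single[OF h(2)] sat_single[OF h(3)] by iprover
        then have "v \<in> s \<union> u" using v unfolding s_def u_def by blast }
      then show ?thesis unfolding s_def u_def by blast
    qed
    ultimately show "sat t (Disj a b)" unfolding sat.simps by blast
  qed
next
  case (Conj a b)
  then have ca: "classical a" and cb: "classical b" by auto
  have 1: "sat t a \<longleftrightarrow> (\<forall>v\<in>t. sat {v} a)" by (rule Conj.IH(1)[OF ca])
  have 2: "sat t b \<longleftrightarrow> (\<forall>v\<in>t. sat {v} b)" by (rule Conj.IH(2)[OF cb])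
  show ?case by (simp only: sat.simps 1 2 ball_conj_distrib)
next
  case (Neg a) show ?case by simp
next
  case (Var p) show ?case by simp
next
  case Bot show ?case by simp
next
  case (IDisj a b) then show ?case by simp
qed

lemma msat_flat: "classicals M \<Longrightarrow> msat t M \<longleftrightarrow> (\<forall>v\<in>t. msat {v} M)"
proof (induction M arbitrary: t)
  case empty then show ?case by (auto simp: msat_empty)
next
  case (add a M)
  have ca: "classical a" and cM: "classicals M" using add.prems by (auto simp: classicals_def)
  show ?case
  proof
    assume "msat t (add_mset a M)"
    then show "\<forall>v\<in>t. msat {v} (add_mset a M)" using msat_single by blast
  next
    assume H: "\<forall>v\<in>t. msat {v} (add_mset a M)"
    define s where "s = {v\<in>t. sat {v} a}"
    define u where "u = {v\<in>t. msat {v} M}"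
    have "sat s a" using sat_flat[OF ca, of s] by (simp add: s_def)
    moreover have "msat u M" using add.IH[OF cM, of u] by (simp add: u_def)
    moreover have "t = s \<union> u"
    proof -
      { fix v assume v: "v \<in> t"
        have "msat {v} (add_mset a M)" using H v by blast
        then obtain s' u' where h: "{v} = s' \<union> u'" "sat s' a" "msat u' M" unfolding msat_add by iprover
        have "v \<in> s' \<or> v \<in> u'" using h(1) by blast
        then have "sat {v} a \<or> msat {v} M" using sat_single[OF h(2)] msat_single[OF h(3)] by iprover
        then have "v \<in> s \<union> u" using v unfolding s_def u_def by blast }
      then show ?thesis unfolding s_def u_def by blast
    qed
    ultimately show "msat t (add_mset a M)" using msat.mA by metis
  qed
qed

lemma msat_union: "classicals M \<Longrightarrow> msat s M \<Longrightarrow> msat u M \<Longrightarrow> msat (s \<union> u) M"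
  using msat_flat[of M s] msat_flat[of M u] msat_flat[of M "s \<union> u"] by blast

lemma fill_idisj: "sat t (fill c (IDisj a b)) \<Longrightarrow> sat t (fill c a) \<or> sat t (fill c b)"
proof (induction c arbitrary: t)
  case (CDisjL c x)
  then show ?case by (simp, metis)
next
  case (CDisjR x c)
  then show ?case by (simp, metis)
qed auto

lemma fill_mono: "(\<And>t. sat t x \<Longrightarrow> sat t y) \<Longrightarrow> sat t (fill c x) \<Longrightarrow> sat t (fill c y)"
proof (induction c arbitrary: t)
  case (CDisjL c z)
  then show ?case by (simp, metis)
next
  case (CDisjR z c)
  then show ?case by (simp, metis)
qed auto

lemma sats_down: "\<forall>\<gamma>\<in>#G. sat t \<gamma> \<Longrightarrow> s \<subseteq> t \<Longrightarrow> \<forall>\<gamma>\<in>#G. sat s \<gamma>"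
  using sat_down by blast

lemma sound: "derivable G D \<Longrightarrow> (\<forall>\<gamma>\<in>#G. sat t \<gamma>) \<Longrightarrow> msat t D"
proof (induction G D arbitrary: t rule: derivable.induct)
  case (Ax \<Gamma> \<Delta> p)
  have "sat t (Var p)" using Ax.prems by auto
  from msat.mA[OF this msat_empty_team[of \<Delta>]] show ?case by simp
next
  case (AxBot \<Gamma> \<Delta>)
  have "t = {}" using AxBot.prems by auto
  then show ?case using msat_empty_team by simp
next
  case (LNeg a \<Gamma> \<Delta>)
  have "msat t (add_mset a \<Delta>)" using LNeg.IH LNeg.prems by auto
  then obtain s u where h: "t = s \<union> u" "sat s a" "msat u \<Delta>" unfolding msat_add by iprover
  have tn: "sat t (Neg a)" using LNeg.prems by auto
  have "s = {}"
  proof (rule ccontr)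
    assume "s \<noteq> {}" then obtain v where v: "v \<in> s" by blast
    then have "v \<in> t" using h(1) by blast
    then have "\<not> sat {v} a" using tn by simp
    moreover have "sat {v} a" using sat_single[OF h(2) v] .
    ultimately show False by iprover
  qed
  then show ?case using h by simp
next
  case (RNeg a \<Gamma> \<Delta>)
  define s where "s = {v\<in>t. sat {v} a}"
  define u where "u = {v\<in>t. \<not> sat {v} a}"
  have "sat s a" using sat_flat[OF RNeg.hyps(1), of s] by (simp add: s_def)
  moreover have "\<forall>\<gamma>\<in>#\<Gamma>. sat s \<gamma>" using RNeg.prems sats_down[of \<Gamma> t s] by (auto simp: s_def)
  ultimately have "msat s \<Delta>" using RNeg.IH[of s] by simp
  moreover have "sat u (Neg a)" by (simp add: u_def)
  moreover have "t = u \<union> s" unfolding s_def u_def by blast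
  ultimately show ?case using msat.mA by metis
next
  case (LConj \<phi> \<psi> \<Gamma> \<Delta>)
  show ?case using LConj.IH[of t] LConj.prems by simp
next
  case (RConj \<Lambda> \<Delta> \<Gamma> \<phi> \<psi>)
  define w where "w = {v\<in>t. msat {v} \<Lambda>}"
  define s where "s = t - w"
  have "msat t (add_mset \<phi> \<Lambda>)" using RConj.IH(1)[of t] RConj.prems by simp
  then obtain s1 u1 where h1: "t = s1 \<union> u1" "sat s1 \<phi>" "msat u1 \<Lambda>" unfolding msat_add by iprover
  have "msat t (add_mset \<psi> \<Lambda>)" using RConj.IH(2)[of t] RConj.prems by simp
  then obtain s2 u2 where h2: "t = s2 \<union> u2" "sat s2 \<psi>" "msat u2 \<Lambda>" unfolding msat_add by iprover
  have "u1 \<subseteq> w" using h1 msat_single[OF h1(3)] unfolding w_def by blast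
  then have "s \<subseteq> s1" using h1(1) unfolding s_def by blast
  then have "sat s \<phi>" using sat_down[OF h1(2)] by iprover
  have "u2 \<subseteq> w" using h2 msat_single[OF h2(3)] unfolding w_def by blast
  then have "s \<subseteq> s2" using h2(1) unfolding s_def by blast
  then have "sat s \<psi>" using sat_down[OF h2(2)] by iprover
  have "msat w \<Lambda>" using msat_flat[OF RConj.hyps(1), of w] by (simp add: w_def)
  then have "msat (w \<union> {}) (\<Lambda> + \<Delta>)" unfolding msat_plus using msat_empty_team by iprover
  then have "msat w (\<Lambda> + \<Delta>)" by simp
  moreover have "t = s \<union> w" unfolding s_def w_def by blast
  moreover have "sat s (Conj \<phi> \<psi>)" using \<open>sat s \<phi>\<close> \<open>sat s \<psi>\<close> by simp
  ultimately show ?case using msat.mA by metis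
next
  case (LDisj \<Lambda> \<Delta> \<phi> \<Gamma> \<psi>)
  have "sat t (Disj \<phi> \<psi>)" using LDisj.prems by simp
  then obtain s u where h: "t = s \<union> u" "sat s \<phi>" "sat u \<psi>" by auto
  have G: "\<forall>\<gamma>\<in>#\<Gamma>. sat t \<gamma>" using LDisj.prems by simp
  have "\<forall>\<gamma>\<in>#\<Gamma>. sat s \<gamma>" using sats_down[OF G] h(1) by blast
  then have "msat s \<Lambda>" using LDisj.IH(1)[of s] h(2) by simp
  moreover have "\<forall>\<gamma>\<in>#\<Gamma>. sat u \<gamma>" using sats_down[OF G] h(1) by blast
  then have "msat u \<Lambda>" using LDisj.IH(2)[of u] h(3) by simp
  ultimately have "msat t \<Lambda>" using msat_union[OF LDisj.hyps(1)] h(1) by simp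
  then have "msat (t \<union> {}) (\<Lambda> + \<Delta>)" unfolding msat_plus using msat_empty_team by iprover
  then show ?case by simp
next
  case (RDisj \<Gamma> \<phi> \<psi> \<Delta>)
  have "msat t (add_mset \<phi> (add_mset \<psi> \<Delta>))" using RDisj.IH[of t] RDisj.prems by simp
  then obtain s1 u1 where h1: "t = s1 \<union> u1" "sat s1 \<phi>" "msat u1 (add_mset \<psi> \<Delta>)" unfolding msat_add by iprover
  obtain s2 u where h2: "u1 = s2 \<union> u" "sat s2 \<psi>" "msat u \<Delta>" using h1(3) unfolding msat_add by iprover
  have "sat (s1 \<union> s2) (Disj \<phi> \<psi>)" using h1(2) h2(2) by auto
  from msat.mA[OF this h2(3)] show ?case using h1(1) h2(1) by (simp add: sup_assoc)
next
  case (LIDisj c \<phi>L \<Gamma> \<Delta> \<phi>R)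
  have "sat t (fill c (IDisj \<phi>L \<phi>R))" and G: "\<forall>\<gamma>\<in>#\<Gamma>. sat t \<gamma>" using LIDisj.prems by simp_all
  then have "sat t (fill c \<phi>L) \<or> sat t (fill c \<phi>R)" using fill_idisj by blast
  then show ?case
  proof
    assume "sat t (fill c \<phi>L)" then show ?case using LIDisj.IH(1)[of t] G by simp
  next
    assume "sat t (fill c \<phi>R)" then show ?case using LIDisj.IH(2)[of t] G by simp
  qed
next
  case (RIDisjL \<phi>R \<Gamma> c \<phi>L \<Delta>)
  have "msat t (add_mset (fill c \<phi>L) \<Delta>)" using RIDisjL.IH[of t] RIDisjL.prems by simp
  then obtain s u where h: "t = s \<union> u" "sat s (fill c \<phi>L)" "msat u \<Delta>" unfolding msat_add by iprover
  have "sat s (fill c (IDisj \<phi>L \<phi>R))" using fill_mono[OF _ h(2)] by simp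
  then show ?case using h msat.mA by metis
next
  case (RIDisjR \<phi>L \<Gamma> c \<phi>R \<Delta>)
  have "msat t (add_mset (fill c \<phi>R) \<Delta>)" using RIDisjR.IH[of t] RIDisjR.prems by simp
  then obtain s u where h: "t = s \<union> u" "sat s (fill c \<phi>R)" "msat u \<Delta>" unfolding msat_add by iprover
  have "sat s (fill c (IDisj \<phi>L \<phi>R))" using fill_mono[OF _ h(2)] by simp
  then show ?case using h msat.mA by metis
next
  case (Cut \<Gamma> \<phi> \<Delta> \<Pi> \<Sigma>)
  have "msat t (add_mset \<phi> \<Delta>)" using Cut.IH(1)[of t] Cut.prems by simp
  then obtain s u where h: "t = s \<union> u" "sat s \<phi>" "msat u \<Delta>" unfolding msat_add by iprover
  have P: "\<forall>\<gamma>\<in>#\<Pi>. sat t \<gamma>" using Cut.prems by simp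
  have "\<forall>\<gamma>\<in>#\<Pi>. sat s \<gamma>" using sats_down[OF P] h(1) by blast
  then have "msat s \<Sigma>" using Cut.IH(2)[of s] h(2) by simp
  then have "msat (u \<union> s) (\<Delta> + \<Sigma>)" unfolding msat_plus using h(3) by iprover
  then show ?case using h(1) by (simp add: sup_commute)
qed

lemma bigdisj_list_msat: "sat t (bigdisj_list xs) \<longleftrightarrow> msat t (mset xs)"
proof (induction xs arbitrary: t rule: bigdisj_list.induct)
  case 1 then show ?case by (simp add: msat_empty)
next
  case (2 a) then show ?case by (simp add: msat_add msat_empty)
next
  case (3 a b xs)
  have "sat t (bigdisj_list (a # b # xs)) \<longleftrightarrow>
    (\<exists>s u. s \<subseteq> t \<and> u \<subseteq> t \<and> t = s \<union> u \<and> sat s a \<and> msat u (mset (b # xs)))"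
    by (simp only: bigdisj_list.simps sat.simps 3)
  also have "\<dots> \<longleftrightarrow> (\<exists>s u. t = s \<union> u \<and> sat s a \<and> msat u (mset (b # xs)))"
    by blast
  also have "\<dots> \<longleftrightarrow> msat t (mset (a # b # xs))"
    by (simp only: mset.simps msat_add)
  finally show ?case .
qed

theorem theorem3p2:
  fixes \<Gamma> \<Delta> :: "fml multiset"
  assumes "wfs \<Gamma>" and "wfs \<Delta>"
    and "derivable \<Gamma> \<Delta>"
  shows "entails \<Gamma> (bigdisj \<Delta>)"
proof -
  have m: "mset (SOME xs. mset xs = \<Delta>) = \<Delta>" by (rule someI_ex) (rule ex_mset)
  show ?thesis
    unfolding entails_def bigdisj_def bigdisj_list_msat m
  proof (intro allI impI)
    fix X t assume "\<forall>\<gamma>\<in>#\<Gamma>. sat t \<gamma>"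
    then show "msat t \<Delta>" by (rule sound[OF assms(3)])
  qed
qed

end
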